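(* Let $M$ be a $4$-dimensional manifold with local coordinates $(x^1,\dots,x^4)$, $e_i=\partial/\partial x^i$, and Riemannian metric $g$ with components \[(g_{ij})=\begin{pmatrix} A&B&C&B\\ B&A&B&C\\ C&B&A&B\\ B&C&B&A\end{pmatrix},\] $A,B,C$ smooth functions with $A>C>B>0$. Let $P$ be the almost product structure with component matrix having rows $(0,0,1,0),(0,0,0,1),(1,0,0,0),(0,1,0,0)$. Then $(M,g,P)$ belongs to the class $\mathcal{W}_0$, i.e. $F(x,y,z)=g((\nabla_xP)y,z)=0$ identically (equivalently $\nabla P=0$, $\nabla$ the Levi-Civita connection of $g$), if and only if \[A_3=C_1,\quad A_1=C_3,\quad B_3=B_1,\quad B_4=B_2,\quad A_2=C_4,\quad A_4=C_2,\] where $A_i=\partial A/\partial x^i$, $B_i=\partial B/\partial x^i$, $C_i=\partial C/\partial x^i$. *)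

theory Defs
  imports "HOL-Analysis.Analysis"
begin

text \<open>Local coordinates (x^1,...,x^4) on a chart: points are vectors in real^4 ranging
 over an open set U.  Coordinate index k (k = 1..4) corresponds to the element
 coord k of the index type 4; conversely idx i in {0..3} is the position of i.\<close>

definition coord :: "nat \<Rightarrow> 4" where
  "coord k = of_nat (k - 1)"

definition idx :: "4 \<Rightarrow> nat" where
  "idx i = nat (Rep_bit0 i)"

definition pd :: "4 \<Rightarrow> (real^4 \<Rightarrow> real) \<Rightarrow> real^4 \<Rightarrow> real" where
  "pd i f x = frechet_derivative f (at x) (axis i 1)"

fun pds :: "4 list \<Rightarrow> (real^4 \<Rightarrow> real) \<Rightarrow> real^4 \<Rightarrow> real" where
  "pds [] f = f"
| "pds (i # is) f = pd i (pds is f)"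

definition smooth_on :: "(real^4) set \<Rightarrow> (real^4 \<Rightarrow> real) \<Rightarrow> bool" where
  "smooth_on U f \<longleftrightarrow> (\<forall>is. pds is f differentiable_on U)"

text \<open>Christoffel symbols of the Levi-Civita connection of a metric with component
 matrix g x (entry g x \$ i \$ j = g_ij):
 Gamma^k_ij = 1/2 g^kl (d_i g_jl + d_j g_il - d_l g_ij), so that nabla_{e_i} e_j = Gamma^k_ij e_k.\<close>
definition christoffel :: "(real^4 \<Rightarrow> real^4^4) \<Rightarrow> 4 \<Rightarrow> 4 \<Rightarrow> 4 \<Rightarrow> real^4 \<Rightarrow> real" where
  "christoffel g k i j x = (1/2) * (\<Sum>l\<in>UNIV. matrix_inv (g x) $ k $ l *
      (pd i (\<lambda>y. g y $ j $ l) x + pd j (\<lambda>y. g y $ i $ l) x - pd l (\<lambda>y. g y $ i $ j) x))"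

text \<open>Components of the covariant derivative of a (1,1)-tensor P (entry P x \$ k \$ j = P^k_j,
 i.e. P e_j = P^k_j e_k): (nabla_{e_i} P) e_j = (nabla_i P)^k_j e_k.\<close>
definition nablaP :: "(real^4 \<Rightarrow> real^4^4) \<Rightarrow> (real^4 \<Rightarrow> real^4^4) \<Rightarrow> 4 \<Rightarrow> 4 \<Rightarrow> 4 \<Rightarrow> real^4 \<Rightarrow> real" where
  "nablaP g P i k j x = pd i (\<lambda>y. P y $ k $ j) x
      + (\<Sum>m\<in>UNIV. christoffel g k i m x * P x $ m $ j)
      - (\<Sum>m\<in>UNIV. christoffel g m i j x * P x $ k $ m)"

text \<open>F(e_i, e_j, e_l) = g((nabla_{e_i} P) e_j, e_l).\<close>
definition Ften :: "(real^4 \<Rightarrow> real^4^4) \<Rightarrow> (real^4 \<Rightarrow> real^4^4) \<Rightarrow> 4 \<Rightarrow> 4 \<Rightarrow> 4 \<Rightarrow> real^4 \<Rightarrow> real" where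
  "Ften g P i j l x = (\<Sum>k\<in>UNIV. g x $ k $ l * nablaP g P i k j x)"

text \<open>Class W_0: F vanishes identically (F is trilinear, so this is vanishing on the
 coordinate frame at every point of the chart).\<close>
definition in_W0 :: "(real^4) set \<Rightarrow> (real^4 \<Rightarrow> real^4^4) \<Rightarrow> (real^4 \<Rightarrow> real^4^4) \<Rightarrow> bool" where
  "in_W0 U g P \<longleftrightarrow> (\<forall>x\<in>U. \<forall>i j l. Ften g P i j l x = 0)"

definition gABC :: "(real^4 \<Rightarrow> real) \<Rightarrow> (real^4 \<Rightarrow> real) \<Rightarrow> (real^4 \<Rightarrow> real) \<Rightarrow> real^4 \<Rightarrow> real^4^4" where
  "gABC A B C x = (\<chi> i j. [[A x, B x, C x, B x],
                            [B x, A x, B x, C x],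
                            [C x, B x, A x, B x],
                            [B x, C x, B x, A x]] ! idx i ! idx j)"

definition Pstr :: "real^4 \<Rightarrow> real^4^4" where
  "Pstr x = (\<chi> i j. [[0, 0, 1, 0],
                      [0, 0, 0, 1],
                      [1, 0, 0, 0],
                      [0, 1, 0, 0]] ! idx i ! idx j)"

end

theory Submission
  imports Defs
begin

lemma four0: "(4::4) = 0" by simp
lemma U4': "(UNIV::4 set) = {0,1,2,3}"
  using exhaust_4 four0 by auto
lemma sum4: "sum f (UNIV::4 set) = f 0 + f 1 + f 2 + f 3"
  unfolding U4' by (simp add: ac_simps)
lemma all4: "(\<forall>i::4. P i) \<longleftrightarrow> P 0 \<and> P 1 \<and> P 2 \<and> P 3"
  by (metis UNIV_I U4' insertE empty_iff)
lemma idx_simps[simp]: "idx 0 = 0" "idx 1 = 1" "idx 2 = 2" "idx 3 = 3"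
  unfolding idx_def by (simp_all add: bit0.Rep_0 bit0.Rep_1 bit0.Rep_numeral)
lemma coord_simps[simp]: "coord 1 = 0" "coord 2 = 1" "coord 3 = 2" "coord 4 = 3"
  unfolding coord_def by simp_all


definition Dg :: "(real^4 \<Rightarrow> real^4^4) \<Rightarrow> 4 \<Rightarrow> 4 \<Rightarrow> 4 \<Rightarrow> real^4 \<Rightarrow> real" where
  "Dg g i j l x = pd i (\<lambda>y. g y $ j $ l) x + pd j (\<lambda>y. g y $ i $ l) x - pd l (\<lambda>y. g y $ i $ j) x"

lemma christ_Dg: "christoffel g k i j x = 1/2 * (\<Sum>l\<in>UNIV. matrix_inv (g x)$k$l * Dg g i j l x)"
  by (simp add: christoffel_def Dg_def)

lemma lower:
  assumes inv: "g x ** matrix_inv (g x) = mat 1"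
    and sym: "\<forall>a b. g x $a$b = g x $b$a"
  shows "(\<Sum>k\<in>UNIV. g x $ k $ l * christoffel g k i m x) = 1/2 * Dg g i m l x"
proof -
  have "(\<Sum>k\<in>UNIV. g x $ k $ l * christoffel g k i m x)
     = 1/2 * (\<Sum>k\<in>UNIV. \<Sum>n\<in>UNIV. g x $ l $ k * matrix_inv (g x) $ k $ n * Dg g i m n x)"
    unfolding christ_Dg using sym
    by (simp add: sum_distrib_left mult_ac)
  also have "\<dots> = 1/2 * (\<Sum>n\<in>UNIV. (\<Sum>k\<in>UNIV. g x $ l $ k * matrix_inv (g x) $ k $ n) * Dg g i m n x)"
    by (subst sum.swap) (simp add: sum_distrib_right)
  also have "\<dots> = 1/2 * (\<Sum>n\<in>UNIV. (mat 1 :: real^4^4) $ l $ n * Dg g i m n x)"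
    using inv[symmetric] by (simp add: matrix_matrix_mult_def)
  also have "\<dots> = 1/2 * (\<Sum>n\<in>UNIV. if l = n then Dg g i m n x else 0)"
    by (intro arg_cong[where f="(*) (1/2)"] sum.cong) (auto simp: mat_def)
  also have "\<dots> = 1/2 * Dg g i m l x" by simp
  finally show ?thesis .
qed

lemma Ften_formula:
  fixes g P :: "real^4 \<Rightarrow> real^4^4"
  assumes inv: "g x ** matrix_inv (g x) = mat 1"
    and sym: "\<forall>a b. g x $a$b = g x $b$a"
    and comm: "\<forall>m l. (\<Sum>k\<in>UNIV. g x$k$l * P x$k$m) = (\<Sum>k\<in>UNIV. g x$m$k * P x$k$l)"
    and Pc: "\<forall>k j. pd i (\<lambda>y. P y $k$j) x = 0"
  shows "Ften g P i j l x = 1/2 * ((\<Sum>m\<in>UNIV. P x$m$j * Dg g i m l x) - (\<Sum>k\<in>UNIV. P x$k$l * Dg g i j k x))"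
proof -
  have e1: "Ften g P i j l x = (\<Sum>k\<in>UNIV. \<Sum>m\<in>UNIV. g x$k$l * (christoffel g k i m x * P x$m$j))
      - (\<Sum>k\<in>UNIV. \<Sum>m\<in>UNIV. g x$k$l * (christoffel g m i j x * P x$k$m))"
    unfolding Ften_def nablaP_def using Pc
    by (simp add: right_diff_distrib sum_subtractf sum_distrib_left)
  have h1: "(\<Sum>k\<in>UNIV. \<Sum>m\<in>UNIV. g x$k$l * (christoffel g k i m x * P x$m$j))
     = (\<Sum>m\<in>UNIV. P x$m$j * (\<Sum>k\<in>UNIV. g x $ k $ l * christoffel g k i m x))"
    by (subst sum.swap) (simp add: sum_distrib_left mult_ac)
  have h2: "(\<Sum>k\<in>UNIV. \<Sum>m\<in>UNIV. g x$k$l * (christoffel g m i j x * P x$k$m))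
     = (\<Sum>m\<in>UNIV. christoffel g m i j x * (\<Sum>k\<in>UNIV. g x$k$l * P x$k$m))"
    by (subst sum.swap) (simp add: sum_distrib_left mult_ac)
  have h3: "(\<Sum>m\<in>UNIV. christoffel g m i j x * (\<Sum>k\<in>UNIV. g x$m$k * P x$k$l))
     = (\<Sum>k\<in>UNIV. P x$k$l * (\<Sum>m\<in>UNIV. g x $ m $ k * christoffel g m i j x))"
    unfolding sum_distrib_left by (subst sum.swap) (simp add: mult_ac)
  have h4: "(\<Sum>m\<in>UNIV. g x $ m $ k * christoffel g m i j x) = 1/2 * Dg g i j k x" for k
    using lower[of g x, OF inv sym] .
  have h5: "(\<Sum>k\<in>UNIV. g x $ k $ l * christoffel g k i m x) = 1/2 * Dg g i m l x" for m
    using lower[of g x, OF inv sym] .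
  have c: "(\<Sum>k\<in>UNIV. g x$k$l * P x$k$m) = (\<Sum>k\<in>UNIV. g x$m$k * P x$k$l)" for m
    using comm by blast
  have "Ften g P i j l x = (\<Sum>m\<in>UNIV. P x$m$j * (1/2 * Dg g i m l x)) - (\<Sum>k\<in>UNIV. P x$k$l * (1/2 * Dg g i j k x))"
    unfolding e1 h1 h2 h5 c h3 h4 ..
  then show ?thesis
    by (simp add: sum_distrib_left right_diff_distrib mult.left_commute)
qed

definition Mc :: "real \<Rightarrow> real \<Rightarrow> real \<Rightarrow> real^4^4" where
  "Mc a b c = (\<chi> i j. [[a, b, c, b], [b, a, b, c], [c, b, a, b], [b, c, b, a]] ! idx i ! idx j)"

lemma gABC_Mc: "gABC A B C x = Mc (A x) (B x) (C x)"
  unfolding gABC_def Mc_def ..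

lemma Mc_entries[simp]:
  "Mc a b c $ 0 $ 0 = a" "Mc a b c $ 0 $ 1 = b" "Mc a b c $ 0 $ 2 = c" "Mc a b c $ 0 $ 3 = b"
  "Mc a b c $ 1 $ 0 = b" "Mc a b c $ 1 $ 1 = a" "Mc a b c $ 1 $ 2 = b" "Mc a b c $ 1 $ 3 = c"
  "Mc a b c $ 2 $ 0 = c" "Mc a b c $ 2 $ 1 = b" "Mc a b c $ 2 $ 2 = a" "Mc a b c $ 2 $ 3 = b"
  "Mc a b c $ 3 $ 0 = b" "Mc a b c $ 3 $ 1 = c" "Mc a b c $ 3 $ 2 = b" "Mc a b c $ 3 $ 3 = a"
  unfolding Mc_def by simp_all

lemma Mc_mult: "Mc a b c ** Mc a' b' c' = Mc (a*a' + 2*b*b' + c*c') (a*b' + b*a' + b*c' + c*b') (a*c' + 2*b*b' + c*a')"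
  unfolding matrix_matrix_mult_def
  by (simp add: vec_eq_iff all4 sum4 algebra_simps)

lemma Mc_one: "Mc 1 0 0 = mat 1"
  by (simp add: vec_eq_iff all4 mat_def)

lemma Mc_inv:
  assumes "a > c" "c > b" "b > 0"
  shows "invertible (Mc a b c)"
proof -
  define p where "p = 1/(a+2*b+c)"
  define q where "q = 1/(a-c)"
  define r where "r = 1/(a-2*b+c)"
  have "a+2*b+c \<noteq> 0" "a - c \<noteq> 0" "a-2*b+c \<noteq> 0" using assms by auto
  then have "p*(a+2*b+c) = 1" "q*(a-c) = 1" "r*(a-2*b+c) = 1" unfolding p_def q_def r_def by simp_all
  then have hp: "p*a + 2*p*b + p*c = 1" and hq: "q*a - q*c = 1" and hr: "r*a - 2*r*b + r*c = 1"
    by (simp_all add: algebra_simps)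
  define a' where "a' = (p+r)/4 + q/2"
  define b' where "b' = (p-r)/4"
  define c' where "c' = (p+r)/4 - q/2"
  have e1: "a*a' + 2*b*b' + c*c' = 1" unfolding a'_def b'_def c'_def using hp hq hr
    by (simp add: algebra_simps add_divide_distrib diff_divide_distrib; linarith?)
  have e2: "a*b' + b*a' + b*c' + c*b' = 0" unfolding a'_def b'_def c'_def using hp hq hr
    by (simp add: algebra_simps add_divide_distrib diff_divide_distrib; linarith?)
  have e3: "a*c' + 2*b*b' + c*a' = 0" unfolding a'_def b'_def c'_def using hp hq hr
    by (simp add: algebra_simps add_divide_distrib diff_divide_distrib; linarith?)
  have "Mc a b c ** Mc a' b' c' = mat 1"
    unfolding Mc_mult e1 e2 e3 Mc_one ..
  moreover have "Mc a' b' c' ** Mc a b c = mat 1"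
    using e1 e2 e3 unfolding Mc_mult Mc_one[symmetric] by (simp add: algebra_simps)
  ultimately show ?thesis unfolding invertible_def by blast
qed

lemma inv_right: "invertible M \<Longrightarrow> M ** matrix_inv M = mat 1"
  unfolding invertible_def matrix_inv_def by (rule someI2_ex) auto

definition P0 :: "real^4^4" where
  "P0 = (\<chi> i j. [[0, 0, 1, 0], [0, 0, 0, 1], [1, 0, 0, 0], [0, 1, 0, 0]] ! idx i ! idx j)"

lemma Pstr_P0: "Pstr y = P0" unfolding Pstr_def P0_def ..

lemma P0_entries[simp]:
  "P0 $ 0 $ 0 = 0" "P0 $ 0 $ 1 = 0" "P0 $ 0 $ 2 = 1" "P0 $ 0 $ 3 = 0"
  "P0 $ 1 $ 0 = 0" "P0 $ 1 $ 1 = 0" "P0 $ 1 $ 2 = 0" "P0 $ 1 $ 3 = 1"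
  "P0 $ 2 $ 0 = 1" "P0 $ 2 $ 1 = 0" "P0 $ 2 $ 2 = 0" "P0 $ 2 $ 3 = 0"
  "P0 $ 3 $ 0 = 0" "P0 $ 3 $ 1 = 1" "P0 $ 3 $ 2 = 0" "P0 $ 3 $ 3 = 0"
  unfolding P0_def by simp_all

lemma pointwise:
  assumes "A x > C x" "C x > B x" "B x > 0"
  shows "(\<forall>i j l. Ften (gABC A B C) Pstr i j l x = 0) \<longleftrightarrow>
    (pd (coord 3) A x = pd (coord 1) C x
          \<and> pd (coord 1) A x = pd (coord 3) C x
          \<and> pd (coord 3) B x = pd (coord 1) B x
          \<and> pd (coord 4) B x = pd (coord 2) B x
          \<and> pd (coord 2) A x = pd (coord 4) C x
          \<and> pd (coord 4) A x = pd (coord 2) C x)"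
proof -
  have inv: "gABC A B C x ** matrix_inv (gABC A B C x) = mat 1"
    unfolding gABC_Mc using Mc_inv[OF assms] by (rule inv_right)
  have sym: "\<forall>a b. gABC A B C x $a$b = gABC A B C x $b$a"
    unfolding gABC_Mc by (simp add: all4)
  have comm: "\<forall>m l. (\<Sum>k\<in>UNIV. gABC A B C x$k$l * Pstr x$k$m) = (\<Sum>k\<in>UNIV. gABC A B C x$m$k * Pstr x$k$l)"
    unfolding gABC_Mc Pstr_P0 by (simp add: all4 sum4)
  have Pc: "\<forall>k j. pd i (\<lambda>y. Pstr y $k$j) x = 0" for i
    unfolding Pstr_P0 pd_def by simp
  have F: "Ften (gABC A B C) Pstr i j l x = 1/2 * ((\<Sum>m\<in>UNIV. Pstr x$m$j * Dg (gABC A B C) i m l x) - (\<Sum>k\<in>UNIV. Pstr x$k$l * Dg (gABC A B C) i j k x))" for i j l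
    by (rule Ften_formula[of "gABC A B C" x Pstr, OF inv sym comm Pc])
  show ?thesis
    unfolding F Pstr_P0 Dg_def gABC_Mc coord_simps
    by (simp add: all4 sum4; intro iffI; (elim conjE)?; (intro conjI)?; linarith)
qed

theorem theorem3p4:
  fixes A B C :: "real^4 \<Rightarrow> real" and U :: "(real^4) set"
  assumes "open U"
    and "smooth_on U A" and "smooth_on U B" and "smooth_on U C"
    and "\<forall>x\<in>U. A x > C x \<and> C x > B x \<and> B x > 0"
  shows "in_W0 U (gABC A B C) Pstr \<longleftrightarrow>
    (\<forall>x\<in>U. pd (coord 3) A x = pd (coord 1) C x
          \<and> pd (coord 1) A x = pd (coord 3) C x
          \<and> pd (coord 3) B x = pd (coord 1) B x
          \<and> pd (coord 4) B x = pd (coord 2) B x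
          \<and> pd (coord 2) A x = pd (coord 4) C x
          \<and> pd (coord 4) A x = pd (coord 2) C x)"
  unfolding in_W0_def using assms(5) pointwise[of C _ A B] by auto

end
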